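(* Let $p$ be even, let $\mathcal{C}_0$ be a fixed two-sided $p$-periodic CMV matrix, and let $1\le q\le\infty$. There is a constant $C$ such that for any sequence of Verblunsky coefficients $\alpha=\{\alpha_n\}$, $$e^{-p}\bigl\|\tilde d_m(\alpha,\mathcal{T}_{\mathcal{C}_0})\bigr\|_{\ell^q}\le\bigl\|d_m(\alpha,\mathcal{T}_{\mathcal{C}_0})\bigr\|_{\ell^q}\le C\bigl\|\tilde d_m(\alpha,\mathcal{T}_{\mathcal{C}_0})\bigr\|_{\ell^q}.$$
   Context: Verblunsky coefficients are complex numbers $\alpha_n\in\mathbb{D}$. For $\alpha\in\mathbb{D}$, $\rho=(1-|\alpha|^2)^{1/2}$. A two-sided $p$-periodic CMV matrix $\mathcal{C}_0$ is determined by a $p$-periodic sequence $\{\alpha^{(0)}_n\}_{n\in\mathbb{Z}}\subset\mathbb{D}$; its discriminant is $\Delta_{\mathcal{C}_0}(z)=\mathrm{Tr}(z^{-p/2}M_{p-1}(z)\cdots M_0(z))$ with $M_n(z)=(\rho^{(0)}_n)^{-1}\begin{pmatrix}z&-\bar\alpha^{(0)}_n\\-\alpha^{(0)}_nz&1\end{pmatrix}$, and the isospectral torus $\mathcal{T}_{\mathcal{C}_0}$ is the set of $p$-periodic sequences in $\mathbb{D}$ with the same discriminant. $d_m(\alpha,\alpha')=\sum_{k=0}^\infty e^{-k}|\alpha_{m+k}-\alpha'_{m+k}|$ and $\tilde d_m(\alpha,\alpha')=\sum_{k=0}^{p}|\alpha_{m+k}-\alpha'_{m+k}|$; distances to $\mathcal{T}_{\mathcal{C}_0}$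 are infima over $\alpha'\in\mathcal{T}_{\mathcal{C}_0}$. The $\ell^q$ norms are over $m$. *)

theory Defs
  imports "HOL-Analysis.Analysis"
begin

text \<open>2x2 complex matrices as quadruples (a,b,c,d) = [[a,b],[c,d]].\<close>
type_synonym cmat2 = "complex \<times> complex \<times> complex \<times> complex"

definition mat2_mult :: "cmat2 \<Rightarrow> cmat2 \<Rightarrow> cmat2" where
  "mat2_mult A B = (case A of (a,b,c,d) \<Rightarrow> case B of (e,f,g,h) \<Rightarrow>
     (a*e + b*g, a*f + b*h, c*e + d*g, c*f + d*h))"

definition mat2_trace :: "cmat2 \<Rightarrow> complex" where
  "mat2_trace A = (case A of (a,b,c,d) \<Rightarrow> a + d)"

definition mat2_scale :: "complex \<Rightarrow> cmat2 \<Rightarrow> cmat2" where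
  "mat2_scale s A = (case A of (a,b,c,d) \<Rightarrow> (s*a, s*b, s*c, s*d))"

definition rho :: "complex \<Rightarrow> real" where
  "rho a = sqrt (1 - (cmod a)^2)"

definition szego_mat :: "(int \<Rightarrow> complex) \<Rightarrow> nat \<Rightarrow> complex \<Rightarrow> cmat2" where
  "szego_mat al n z = mat2_scale (complex_of_real (1 / rho (al (int n))))
      (z, - cnj (al (int n)), - al (int n) * z, 1)"

fun transfer :: "(int \<Rightarrow> complex) \<Rightarrow> nat \<Rightarrow> complex \<Rightarrow> cmat2" where
  "transfer al 0 z = (1, 0, 0, 1)"
| "transfer al (Suc n) z = mat2_mult (szego_mat al n z) (transfer al n z)"

definition discriminant :: "nat \<Rightarrow> (int \<Rightarrow> complex) \<Rightarrow> complex \<Rightarrow> complex" where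
  "discriminant p al z = mat2_trace (mat2_scale (z powi (- int (p div 2))) (transfer al p z))"

definition periodic_verblunsky :: "nat \<Rightarrow> (int \<Rightarrow> complex) \<Rightarrow> bool" where
  "periodic_verblunsky p al \<longleftrightarrow> (\<forall>n. al (n + int p) = al n) \<and> (\<forall>n. cmod (al n) < 1)"

definition iso_torus :: "nat \<Rightarrow> (int \<Rightarrow> complex) \<Rightarrow> (int \<Rightarrow> complex) set" where
  "iso_torus p al0 = {al. periodic_verblunsky p al \<and>
      (\<forall>z. z \<noteq> 0 \<longrightarrow> discriminant p al z = discriminant p al0 z)}"

definition dm :: "nat \<Rightarrow> (nat \<Rightarrow> complex) \<Rightarrow> (int \<Rightarrow> complex) \<Rightarrow> real" where
  "dm m a a' = (\<Sum>k. exp (- real k) * cmod (a (m + k) - a' (int (m + k))))"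

definition dm_tilde :: "nat \<Rightarrow> nat \<Rightarrow> (nat \<Rightarrow> complex) \<Rightarrow> (int \<Rightarrow> complex) \<Rightarrow> real" where
  "dm_tilde p m a a' = (\<Sum>k\<le>p. cmod (a (m + k) - a' (int (m + k))))"

definition dist_torus :: "nat \<Rightarrow> (int \<Rightarrow> complex) \<Rightarrow> nat \<Rightarrow> (nat \<Rightarrow> complex) \<Rightarrow> real" where
  "dist_torus p al0 m a = (INF a'\<in>iso_torus p al0. dm m a a')"

definition dist_torus_tilde :: "nat \<Rightarrow> (int \<Rightarrow> complex) \<Rightarrow> nat \<Rightarrow> (nat \<Rightarrow> complex) \<Rightarrow> real" where
  "dist_torus_tilde p al0 m a = (INF a'\<in>iso_torus p al0. dm_tilde p m a a')"

definition lq_norm :: "ereal \<Rightarrow> (nat \<Rightarrow> real) \<Rightarrow> ennreal" where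
  "lq_norm q f = (if q = \<infinity> then (SUP m. ennreal \<bar>f m\<bar>)
     else (let r = real_of_ereal q in
       if summable (\<lambda>m. \<bar>f m\<bar> powr r)
       then ennreal ((\<Sum>m. \<bar>f m\<bar> powr r) powr (1 / r)) else top))"

end

theory Submission
  imports Defs
begin
lemma powr_convex0:
  assumes "(r::real) \<ge> 1" shows "convex_on {0..} (\<lambda>x::real. x powr r)"
proof (rule convex_onI)
  show "convex {0::real..}" by simp
  fix t x y :: real assume t: "0 < t" "t < 1" and xy: "x \<in> {0..}" "y \<in> {0..}"
  show "((1 - t) *\<^sub>R x + t *\<^sub>R y) powr r \<le> (1 - t) * x powr r + t * y powr r"
  proof (cases "x = 0 \<or> y = 0")
    case True
    have key: "s powr r \<le> s" if "0 \<le> s" "s \<le> 1" for s :: real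
    proof -
      have "s powr r \<le> s powr 1" using that assms by (intro powr_mono') auto
      then show ?thesis using that by simp
    qed
    show ?thesis
    proof (cases "x = 0")
      case True
      have "((1 - t) *\<^sub>R x + t *\<^sub>R y) powr r = t powr r * y powr r"
        using True t xy by (simp add: powr_mult)
      also have "\<dots> \<le> t * y powr r" using key[of t] t by (intro mult_right_mono) auto
      finally show ?thesis using True assms by simp
    next
      case False
      then have "y = 0" using True by simp
      have "((1 - t) *\<^sub>R x + t *\<^sub>R y) powr r = (1-t) powr r * x powr r"
        using \<open>y=0\<close> t xy by (simp add: powr_mult)
      also have "\<dots> \<le> (1-t) * x powr r" using key[of "1-t"] t by (intro mult_right_mono) auto
      finally show ?thesis using \<open>y=0\<close> assms by simp
    qed
  next
    case False
    then have "x \<in> {0<..}" "y \<in> {0<..}" using xy by auto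
    then show ?thesis using convex_onD[OF powr_convex[OF assms], of t x y] t by auto
  qed
qed

lemma jensen_fin:
  fixes w x :: "nat \<Rightarrow> real" and r :: real
  assumes r: "r \<ge> 1" and w: "\<And>i. 0 \<le> w i" and x: "\<And>i. 0 \<le> x i"
  shows "(\<Sum>i<N. w i * x i) powr r \<le> (\<Sum>i<N. w i) powr (r-1) * (\<Sum>i<N. w i * x i powr r)"
proof (cases "(\<Sum>i<N. w i) = 0")
  case True
  then have "\<forall>i\<in>{..<N}. w i = 0" using w by (subst sum_nonneg_eq_0_iff[symmetric]) auto
  then have "(\<Sum>i<N. w i * x i) = 0" by simp
  then show ?thesis using True r by simp
next
  case False
  define W where "W = (\<Sum>i<N. w i)"
  have W: "W > 0" using False w unfolding W_def by (simp add: order_less_le sum_nonneg)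
  have N: "{..<N} \<noteq> {}" using False by auto
  have "(\<Sum>i<N. (w i / W) *\<^sub>R x i) powr r \<le> (\<Sum>i<N. (w i / W) * x i powr r)"
    by (rule convex_on_sum[OF _ N powr_convex0[OF r]]) (use W w x in \<open>auto simp: W_def sum_divide_distrib[symmetric]\<close>)
  then have "((\<Sum>i<N. w i * x i) / W) powr r \<le> (\<Sum>i<N. w i * x i powr r) / W"
    by (simp add: sum_divide_distrib)
  then have "(\<Sum>i<N. w i * x i) powr r / W powr r \<le> (\<Sum>i<N. w i * x i powr r) / W"
    using W x w by (simp add: powr_divide sum_nonneg)
  then have "(\<Sum>i<N. w i * x i) powr r \<le> W powr r * ((\<Sum>i<N. w i * x i powr r) / W)"
    using W by (simp add: divide_le_eq mult.commute)
  also have "\<dots> = W powr (r-1) * (\<Sum>i<N. w i * x i powr r)"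
    using W by (simp add: powr_diff)
  finally show ?thesis unfolding W_def .
qed

lemma jensen_inf:
  fixes w x :: "nat \<Rightarrow> real" and r :: real
  assumes r: "r \<ge> 1" and w: "\<And>i. 0 \<le> w i" and x: "\<And>i. 0 \<le> x i"
    and s1: "summable w" and s2: "summable (\<lambda>i. w i * x i)" and s3: "summable (\<lambda>i. w i * x i powr r)"
  shows "(\<Sum>i. w i * x i) powr r \<le> (\<Sum>i. w i) powr (r-1) * (\<Sum>i. w i * x i powr r)"
proof (rule LIMSEQ_le_const2)
  show "(\<lambda>N. (\<Sum>i<N. w i * x i) powr r) \<longlonglongrightarrow> (\<Sum>i. w i * x i) powr r"
    using r w x by (intro tendsto_powr' summable_LIMSEQ[OF s2]) (auto intro!: sum_nonneg always_eventually)
  show "\<exists>N. \<forall>n\<ge>N. (\<Sum>i<n. w i * x i) powr r \<le> (\<Sum>i. w i) powr (r-1) * (\<Sum>i. w i * x i powr r)"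
  proof (intro exI allI impI)
    fix n
    have "(\<Sum>i<n. w i * x i) powr r \<le> (\<Sum>i<n. w i) powr (r-1) * (\<Sum>i<n. w i * x i powr r)"
      by (rule jensen_fin[OF r w x])
    also have "\<dots> \<le> (\<Sum>i. w i) powr (r-1) * (\<Sum>i. w i * x i powr r)"
      using r w x by (intro mult_mono powr_mono2 sum_le_suminf s1 s3) (auto intro!: sum_nonneg)
    finally show "(\<Sum>i<n. w i * x i) powr r \<le> (\<Sum>i. w i) powr (r-1) * (\<Sum>i. w i * x i powr r)" .
  qed
qed


lemma q_cases:
  assumes "1 \<le> (q::ereal)" "q \<noteq> \<infinity>"
  shows "q = ereal (real_of_ereal q) \<and> real_of_ereal q \<ge> 1"
  using assms by (cases q) auto

lemma lq_mono:
  assumes q: "1 \<le> q" and l: "l > 0" and fg: "\<And>m. \<bar>f m\<bar> \<le> l * \<bar>g m\<bar>"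
  shows "lq_norm q f \<le> ennreal l * lq_norm q g"
proof (cases "q = \<infinity>")
  case True
  have "(SUP m. ennreal \<bar>f m\<bar>) \<le> ennreal l * (SUP m. ennreal \<bar>g m\<bar>)"
  proof (rule SUP_least)
    fix m
    have "ennreal \<bar>f m\<bar> \<le> ennreal (l * \<bar>g m\<bar>)" using fg by (intro ennreal_leI) auto
    also have "\<dots> = ennreal l * ennreal \<bar>g m\<bar>" using l by (simp add: ennreal_mult)
    also have "\<dots> \<le> ennreal l * (SUP m. ennreal \<bar>g m\<bar>)" by (intro mult_left_mono SUP_upper) auto
    finally show "ennreal \<bar>f m\<bar> \<le> ennreal l * (SUP m. ennreal \<bar>g m\<bar>)" .
  qed
  then show ?thesis using True by (simp add: lq_norm_def)
next
  case False
  define r where "r = real_of_ereal q"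
  have r: "r \<ge> 1" using q_cases[OF q False] r_def by simp
  show ?thesis
  proof (cases "summable (\<lambda>m. \<bar>g m\<bar> powr r)")
    case False
    then show ?thesis using \<open>q \<noteq> \<infinity>\<close> l by (simp add: lq_norm_def r_def[symmetric] ennreal_mult_top)
  next
    case True
    have le: "\<bar>f m\<bar> powr r \<le> l powr r * \<bar>g m\<bar> powr r" for m
    proof -
      have "\<bar>f m\<bar> powr r \<le> (l * \<bar>g m\<bar>) powr r" using fg r by (intro powr_mono2) auto
      then show ?thesis using l by (simp add: powr_mult)
    qed
    have sf: "summable (\<lambda>m. \<bar>f m\<bar> powr r)"
      by (rule summable_comparison_test'[OF summable_mult[OF True, of "l powr r"]]) (use le in auto)
    have "(\<Sum>m. \<bar>f m\<bar> powr r) \<le> (\<Sum>m. l powr r * \<bar>g m\<bar> powr r)"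
      by (intro suminf_le sf summable_mult True le)
    also have "\<dots> = l powr r * (\<Sum>m. \<bar>g m\<bar> powr r)" by (rule suminf_mult[OF True])
    finally have "(\<Sum>m. \<bar>f m\<bar> powr r) powr (1/r) \<le> (l powr r * (\<Sum>m. \<bar>g m\<bar> powr r)) powr (1/r)"
      using r by (intro powr_mono2) (auto intro!: suminf_nonneg sf)
    also have "\<dots> = l * (\<Sum>m. \<bar>g m\<bar> powr r) powr (1/r)"
      using l r True by (simp add: powr_mult powr_powr suminf_nonneg)
    finally have "ennreal ((\<Sum>m. \<bar>f m\<bar> powr r) powr (1/r)) \<le> ennreal l * ennreal ((\<Sum>m. \<bar>g m\<bar> powr r) powr (1/r))"
      using l by (simp add: ennreal_mult[symmetric] ennreal_leI)
    then show ?thesis using \<open>q \<noteq> \<infinity>\<close> True sf by (simp add: lq_norm_def r_def[symmetric])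
  qed
qed


lemma lq_conv:
  fixes t :: "nat \<Rightarrow> real" and c B :: real
  assumes q: "1 \<le> q" and c: "0 < c" "c < 1" and t0: "\<And>m. 0 \<le> t m" and tB: "\<And>m. t m \<le> B"
  shows "lq_norm q (\<lambda>m. \<Sum>i. c^i * t (m+i)) \<le> ennreal (1/(1-c)) * lq_norm q t"
proof -
  define S where "S = 1/(1-c)"
  have S: "S > 0" using c by (simp add: S_def)
  have geo: "summable (\<lambda>i. c^i)" "(\<Sum>i. c^i) = S" using c by (auto simp: S_def suminf_geometric)
  have B0: "B \<ge> 0" using t0[of 0] tB[of 0] by simp
  have sh: "summable (\<lambda>i. c^i * t (m+i))" for m
    by (rule summable_comparison_test'[OF summable_mult2[OF geo(1), of B]]) (use c t0 tB in \<open>auto intro: mult_left_mono\<close>)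
  have h0: "0 \<le> (\<Sum>i. c^i * t (m+i))" for m using sh c t0 by (intro suminf_nonneg) auto
  show ?thesis
  proof (cases "q = \<infinity>")
    case True
    define U where "U = (SUP m. ennreal \<bar>t m\<bar>)"
    have "U \<le> ennreal B" unfolding U_def
    proof (rule SUP_least)
      fix m show "ennreal \<bar>t m\<bar> \<le> ennreal B" using tB[of m] t0[of m] by (intro ennreal_leI) simp
    qed
    then have Ut: "U < top" by (rule le_less_trans) simp
    define M where "M = enn2real U"
    have UM: "U = ennreal M" using Ut unfolding M_def by simp
    have M0: "M \<ge> 0" unfolding M_def by simp
    have tM: "t m \<le> M" for m
    proof -
      have "ennreal \<bar>t m\<bar> \<le> ennreal M" unfolding UM[symmetric] U_def by (rule SUP_upper) auto
      then show ?thesis using M0 t0[of m] by simp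
    qed
    have "(SUP m. ennreal \<bar>\<Sum>i. c^i * t (m+i)\<bar>) \<le> ennreal S * U"
    proof (rule SUP_least)
      fix m
      have "(\<Sum>i. c^i * t (m+i)) \<le> (\<Sum>i. c^i * M)"
        by (intro suminf_le sh summable_mult2 geo mult_left_mono tM) (use c in auto)
      also have "\<dots> = S * M" by (subst suminf_mult2[symmetric, OF geo(1)]) (simp add: geo(2) mult.commute)
      finally show "ennreal \<bar>\<Sum>i. c^i * t (m+i)\<bar> \<le> ennreal S * U"
        using h0[of m] S M0 by (simp add: UM ennreal_mult[symmetric] ennreal_leI)
    qed
    then show ?thesis using True by (simp add: lq_norm_def U_def S_def)
  next
    case False
    define r where "r = real_of_ereal q"
    have r: "r \<ge> 1" using q_cases[OF q False] r_def by simp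
    show ?thesis
    proof (cases "summable (\<lambda>m. \<bar>t m\<bar> powr r)")
      case False
      then show ?thesis using \<open>q \<noteq> \<infinity>\<close> S by (simp add: lq_norm_def r_def[symmetric] ennreal_mult_top S_def)
    next
      case True
      define T where "T = (\<Sum>m. \<bar>t m\<bar> powr r)"
      have T0: "T \<ge> 0" unfolding T_def using True by (intro suminf_nonneg) auto
      have tr: "summable (\<lambda>m. t m powr r)" using True t0 by (simp add: abs_of_nonneg)
      have shr: "summable (\<lambda>i. c^i * t (m+i) powr r)" for m
        by (rule summable_comparison_test'[OF summable_mult2[OF geo(1), of "B powr r"]])
           (use c t0 tB r in \<open>auto intro!: mult_left_mono powr_mono2\<close>)
      have J: "(\<Sum>i. c^i * t (m+i)) powr r \<le> S powr (r-1) * (\<Sum>i. c^i * t (m+i) powr r)" for m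
        using jensen_inf[OF r, of "\<lambda>i. c^i" "\<lambda>i. t (m+i)"] geo sh shr c t0 by auto
      have part: "(\<Sum>m<M. (\<Sum>i. c^i * t (m+i) powr r)) \<le> S * T" for M
      proof -
        have "(\<Sum>m<M. (\<Sum>i. c^i * t (m+i) powr r)) = (\<Sum>i. \<Sum>m<M. c^i * t (m+i) powr r)"
          by (rule suminf_sum[symmetric]) (use shr in auto)
        also have "\<dots> \<le> (\<Sum>i. c^i * T)"
        proof (rule suminf_le)
          show "summable (\<lambda>i. c^i * T)" by (intro summable_mult2 geo)
          show "summable (\<lambda>i. \<Sum>m<M. c^i * t (m+i) powr r)" by (intro summable_sum shr)
          fix i
          have "(\<Sum>m<M. t (m+i) powr r) = (\<Sum>n\<in>(\<lambda>m. m+i) ` {..<M}. t n powr r)"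
            by (simp add: sum.reindex)
          also have "\<dots> \<le> (\<Sum>n<M+i. t n powr r)"
            using t0 by (intro sum_mono2) auto
          also have "\<dots> \<le> T" unfolding T_def using tr t0 sum_le_suminf[OF tr, of "{..<M+i}"]
            by (simp add: abs_of_nonneg)
          finally have "(\<Sum>m<M. t (m+i) powr r) \<le> T" .
          then show "(\<Sum>m<M. c^i * t (m+i) powr r) \<le> c^i * T"
            using c by (simp add: sum_distrib_left[symmetric] mult_left_mono)
        qed
        also have "\<dots> = S * T" by (subst suminf_mult2[symmetric, OF geo(1)]) (simp add: geo(2) mult.commute)
        finally show ?thesis .
      qed
      have hr_le: "\<bar>\<Sum>i. c^i * t (m+i)\<bar> powr r \<le> S powr (r-1) * (\<Sum>i. c^i * t (m+i) powr r)" for m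
        using J h0 by simp
      have bound: "(\<Sum>m<M. \<bar>\<Sum>i. c^i * t (m+i)\<bar> powr r) \<le> S powr r * T" for M
      proof -
        have "(\<Sum>m<M. \<bar>\<Sum>i. c^i * t (m+i)\<bar> powr r) \<le> (\<Sum>m<M. S powr (r-1) * (\<Sum>i. c^i * t (m+i) powr r))"
          by (intro sum_mono hr_le)
        also have "\<dots> \<le> S powr (r-1) * (S * T)" using part S by (simp add: sum_distrib_left[symmetric] mult_left_mono)
        also have "\<dots> = S powr r * T" using S by (simp add: powr_diff)
        finally show ?thesis .
      qed
      have sh': "summable (\<lambda>m. \<bar>\<Sum>i. c^i * t (m+i)\<bar> powr r)"
        by (rule summableI_nonneg_bounded[OF _ bound]) auto
      have "(\<Sum>m. \<bar>\<Sum>i. c^i * t (m+i)\<bar> powr r) \<le> S powr r * T"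
        by (rule suminf_le_const[OF sh' bound])
      then have "(\<Sum>m. \<bar>\<Sum>i. c^i * t (m+i)\<bar> powr r) powr (1/r) \<le> (S powr r * T) powr (1/r)"
        using r sh' by (intro powr_mono2) (auto intro!: suminf_nonneg)
      also have "\<dots> = S * T powr (1/r)" using S r T0 by (simp add: powr_mult powr_powr)
      finally have "ennreal ((\<Sum>m. \<bar>\<Sum>i. c^i * t (m+i)\<bar> powr r) powr (1/r)) \<le> ennreal S * ennreal (T powr (1/r))"
        using S by (simp add: ennreal_mult[symmetric] ennreal_leI)
      then show ?thesis using \<open>q \<noteq> \<infinity>\<close> True sh' by (simp add: lq_norm_def r_def[symmetric] T_def S_def)
    qed
  qed
qed


lemma per_shift:
  assumes "periodic_verblunsky p b"
  shows "b (y + int p * k) = b y"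
proof (induct k rule: int_induct[of _ 0])
  case base then show ?case by simp
next
  case (step1 i)
  have "b (y + int p * (i+1)) = b ((y + int p * i) + int p)" by (simp add: algebra_simps)
  also have "\<dots> = b (y + int p * i)" using assms by (simp add: periodic_verblunsky_def)
  finally show ?case using step1 by simp
next
  case (step2 i)
  have "b (y + int p * i) = b ((y + int p * (i - 1)) + int p)" by (simp add: algebra_simps)
  also have "\<dots> = b (y + int p * (i - 1))" using assms by (simp add: periodic_verblunsky_def)
  finally show ?case using step2 by simp
qed

lemma chain_bound:
  fixes a :: "nat \<Rightarrow> complex" and b :: "nat \<Rightarrow> int \<Rightarrow> complex" and u :: "nat \<Rightarrow> real"
  assumes p: "p > 0" and per: "\<And>n. periodic_verblunsky p (b n)"
    and close: "\<And>n j. j \<le> p \<Longrightarrow> cmod (a (n+j) - b n (int (n+j))) \<le> u n"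
  shows "cmod (a (m+k) - b m (int (m+k))) \<le> 2 * (\<Sum>i\<le>k. u (m+i))"
proof -
  have u0: "0 \<le> u n" for n using close[of 0 n] by (meson norm_ge_zero order_trans zero_le)
  have step: "cmod (b n x - b (Suc n) x) \<le> u n + u (Suc n)" for n x
  proof -
    define j where "j = nat ((x - int n - 1) mod int p)"
    define k where "k = (x - int n - 1) div int p"
    have jp: "j < p" using p unfolding j_def by (simp add: nat_less_iff)
    have jm: "int j = (x - int n - 1) mod int p" using p unfolding j_def by simp
    define y where "y = int n + 1 + int j"
    have xy: "x = y + int p * k" unfolding y_def k_def jm
      by (metis add.commute add.left_commute diff_add_cancel div_mult_mod_eq mult.commute)
    have e1: "b n x = b n y" "b (Suc n) x = b (Suc n) y" unfolding xy using per per_shift by auto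
    have y1: "y = int (n + (j+1))" "y = int (Suc n + j)" unfolding y_def by auto
    have c1: "cmod (a (n + (j+1)) - b n y) \<le> u n" using close[of "j+1" n] jp y1 by simp
    have c2: "cmod (a (Suc n + j) - b (Suc n) y) \<le> u (Suc n)" using close[of j "Suc n"] jp y1 by simp
    have "cmod (b n y - b (Suc n) y) \<le> cmod (a (n + (j+1)) - b n y) + cmod (a (Suc n + j) - b (Suc n) y)"
    proof -
      have "b n y - b (Suc n) y = (a (Suc n + j) - b (Suc n) y) - (a (n + (j+1)) - b n y)" by simp
      then show ?thesis by (metis add.commute norm_triangle_ineq4)
    qed
    then show ?thesis using c1 c2 e1 by simp
  qed
  have chain: "cmod (b m x - b (m+k) x) + u (m+k) \<le> 2 * (\<Sum>i\<le>k. u (m+i))" for k x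
  proof (induct k)
    case 0 then show ?case using u0[of m] by simp
  next
    case (Suc k)
    have "cmod (b m x - b (m + Suc k) x) \<le> cmod (b m x - b (m+k) x) + cmod (b (m+k) x - b (Suc (m+k)) x)"
      using norm_triangle_ineq[of "b m x - b (m+k) x" "b (m+k) x - b (Suc (m+k)) x"] by simp
    then show ?case using Suc step[of "m+k" x] by simp
  qed
  have "cmod (a (m+k) - b m (int (m+k))) \<le> cmod (a (m+k) - b (m+k) (int (m+k))) + cmod (b m (int (m+k)) - b (m+k) (int (m+k)))"
    using norm_triangle_ineq4[of "a (m+k) - b (m+k) (int (m+k))" "b m (int (m+k)) - b (m+k) (int (m+k))"] by simp
  also have "\<dots> \<le> u (m+k) + cmod (b m (int (m+k)) - b (m+k) (int (m+k)))"
    using close[of 0 "m+k"] by simp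
  also have "\<dots> \<le> 2 * (\<Sum>i\<le>k. u (m+i))" using chain[where k=k and x="int (m+k)"] by simp
  finally show ?thesis .
qed


lemma exp_summable: "summable (\<lambda>k::nat. exp (- real k))"
proof -
  have "exp (- real k) = exp (-1) ^ k" for k :: nat
    by (metis exp_of_nat_mult mult_minus1_right)
  then show ?thesis by (simp add: summable_geometric)
qed

theorem proposition4p6:
  fixes p :: nat and al0 :: "int \<Rightarrow> complex" and q :: ereal
  assumes "even p" and "p > 0"
    and "periodic_verblunsky p al0"
    and "1 \<le> q"
  shows "\<exists>C::real. \<forall>a :: nat \<Rightarrow> complex. (\<forall>n. cmod (a n) < 1) \<longrightarrow>
     ennreal (exp (- real p)) * lq_norm q (\<lambda>m. dist_torus_tilde p al0 m a)
        \<le> lq_norm q (\<lambda>m. dist_torus p al0 m a)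
     \<and> lq_norm q (\<lambda>m. dist_torus p al0 m a)
        \<le> ennreal C * lq_norm q (\<lambda>m. dist_torus_tilde p al0 m a)"
proof -
  define c where "c = exp (-1/2 :: real)"
  have c: "0 < c" "c < 1" unfolding c_def by auto
  define S where "S = 1/(1-c)"
  have S: "S > 0" using c by (simp add: S_def)
  have geo: "summable (\<lambda>i. c^i)" "(\<Sum>i. c^i) = S" using c by (auto simp: S_def suminf_geometric)
  define K where "K = 2 * S"
  have K: "K > 0" using S by (simp add: K_def)
  define T where "T = iso_torus p al0"
  have al0T: "al0 \<in> T" using assms(3) by (simp add: T_def iso_torus_def)
  have TNE: "T \<noteq> {}" using al0T by auto
  show ?thesis
  proof (intro exI allI impI conjI)
    fix a :: "nat \<Rightarrow> complex" assume a1: "\<forall>n. cmod (a n) < 1"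
    define t where "t m = dist_torus_tilde p al0 m a" for m
    define d where "d m = dist_torus p al0 m a" for m
    have diff2: "cmod (a n - a' x) \<le> 2" if "a' \<in> T" for a' n x
    proof -
      have "cmod (a' x) < 1" using that by (simp add: T_def iso_torus_def periodic_verblunsky_def)
      then show ?thesis using a1 norm_triangle_ineq4[of "a n" "a' x"] by (smt (verit))
    qed
    have sdm: "summable (\<lambda>k. exp (- real k) * cmod (a (m+k) - a' (int (m+k))))" if "a' \<in> T" for a' m
      by (rule summable_comparison_test'[OF summable_mult[OF exp_summable, of 2]])
         (use diff2[OF that] in \<open>auto simp: mult.commute intro: mult_left_mono\<close>)
    have dm0: "0 \<le> dm m a a'" if "a' \<in> T" for a' m
      unfolding dm_def by (intro suminf_nonneg sdm that) auto
    have dmt0: "0 \<le> dm_tilde p m a a'" for a' m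
      unfolding dm_tilde_def by (intro sum_nonneg) auto
    have bdd1: "bdd_below (dm m a ` T)" for m using dm0 by (auto intro!: bdd_belowI)
    have bdd2: "bdd_below (dm_tilde p m a ` T)" for m using dmt0 by (auto intro!: bdd_belowI)
    have t_def': "t m = (INF a'\<in>T. dm_tilde p m a a')" for m by (simp add: t_def dist_torus_tilde_def T_def)
    have d_def': "d m = (INF a'\<in>T. dm m a a')" for m by (simp add: d_def dist_torus_def T_def)
    have t0: "0 \<le> t m" for m unfolding t_def' by (intro cINF_greatest TNE dmt0)
    have d0: "0 \<le> d m" for m unfolding d_def' by (intro cINF_greatest TNE dm0)
    have tB: "t m \<le> 2 * (real p + 1)" for m
    proof -
      have "t m \<le> dm_tilde p m a al0" unfolding t_def' by (rule cINF_lower[OF bdd2 al0T])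
      also have "\<dots> \<le> (\<Sum>k\<le>p. 2)" unfolding dm_tilde_def by (intro sum_mono diff2 al0T)
      finally show ?thesis by simp
    qed
    have F3: "exp (- real p) * t m \<le> d m" for m
      unfolding d_def'
    proof (rule cINF_greatest[OF TNE])
      fix a' assume a': "a' \<in> T"
      have "exp (- real p) * t m \<le> exp (- real p) * dm_tilde p m a a'"
        unfolding t_def' by (intro mult_left_mono cINF_lower[OF bdd2 a']) auto
      also have "\<dots> = (\<Sum>k\<le>p. exp (- real p) * cmod (a (m+k) - a' (int (m+k))))"
        by (simp add: dm_tilde_def sum_distrib_left)
      also have "\<dots> \<le> (\<Sum>k<Suc p. exp (- real k) * cmod (a (m+k) - a' (int (m+k))))"
        unfolding lessThan_Suc_atMost by (intro sum_mono mult_right_mono) auto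
      also have "\<dots> \<le> dm m a a'" unfolding dm_def
        by (rule sum_le_suminf[OF sdm[OF a']]) auto
      finally show "exp (- real p) * t m \<le> dm m a a'" .
    qed
    define h where "h m = (\<Sum>i. c^i * t (m+i))" for m
    have sh: "summable (\<lambda>i. c^i * t (m+i))" for m
      by (rule summable_comparison_test'[OF summable_mult2[OF geo(1), of "2 * (real p + 1)"]])
         (use c t0 tB in \<open>auto intro: mult_left_mono\<close>)
    have F4: "d m \<le> K * h m" for m
    proof (rule field_le_epsilon)
      fix e :: real assume e: "0 < e"
      define eps where "eps = e / (K * S)"
      have eps: "eps > 0" using e K S by (simp add: eps_def)
      have "\<forall>n. \<exists>b\<in>T. dm_tilde p n a b < t n + eps"
      proof
        fix n
        have "(INF a'\<in>T. dm_tilde p n a a') < t n + eps" using eps t_def' by simp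
        then show "\<exists>b\<in>T. dm_tilde p n a b < t n + eps" by (simp add: cINF_less_iff[OF TNE bdd2])
      qed
      then obtain b where b: "\<And>n. b n \<in> T" "\<And>n. dm_tilde p n a (b n) < t n + eps" by metis
      define u where "u n = t n + eps" for n
      have per: "periodic_verblunsky p (b n)" for n using b(1)[of n] by (simp add: T_def iso_torus_def)
      have close: "cmod (a (n+j) - b n (int (n+j))) \<le> u n" if "j \<le> p" for n j
      proof -
        have "cmod (a (n+j) - b n (int (n+j))) \<le> dm_tilde p n a (b n)"
          unfolding dm_tilde_def using that by (intro member_le_sum[where f="\<lambda>k. cmod (a (n+k) - b n (int (n+k)))"]) auto
        then show ?thesis using b(2)[of n] by (simp add: u_def)
      qed
      have CB: "cmod (a (m+k) - b m (int (m+k))) \<le> 2 * (\<Sum>i\<le>k. u (m+i))" for k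
        by (rule chain_bound[OF assms(2) per close])
      define H where "H = (\<Sum>i. c^i * u (m+i))"
      have sHu: "summable (\<lambda>i. c^i * u (m+i))" unfolding u_def
        using summable_add[OF sh[of m] summable_mult2[OF geo(1), of eps]] by (simp add: algebra_simps)
      have H: "H = h m + eps * S" unfolding H_def u_def h_def
        using suminf_add[OF sh[of m] summable_mult2[OF geo(1), of eps]] suminf_mult2[OF geo(1), of eps] geo(2)
        by (simp add: algebra_simps)
      have termb: "exp (- real k) * cmod (a (m+k) - b m (int (m+k))) \<le> 2 * H * c^k" for k
      proof -
        have ek: "exp (- real k) = c^k * c^k" unfolding c_def
          by (simp add: exp_of_nat_mult[symmetric] exp_add[symmetric])
        have s1: "c^k * (\<Sum>i\<le>k. u (m+i)) \<le> (\<Sum>i\<le>k. c^i * u (m+i))"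
          unfolding sum_distrib_left using c t0 eps
          by (intro sum_mono mult_right_mono power_decreasing) (auto simp: u_def intro: add_nonneg_nonneg)
        have s2: "(\<Sum>i\<le>k. c^i * u (m+i)) \<le> H" unfolding H_def lessThan_Suc_atMost[symmetric]
          using c t0 eps by (intro sum_le_suminf sHu) (auto simp: u_def intro: add_nonneg_nonneg)
        have "exp (- real k) * cmod (a (m+k) - b m (int (m+k))) \<le> c^k * c^k * (2 * (\<Sum>i\<le>k. u (m+i)))"
          unfolding ek using CB[of k] c by (intro mult_left_mono) auto
        also have "\<dots> = 2 * c^k * (c^k * (\<Sum>i\<le>k. u (m+i)))" by (simp add: algebra_simps)
        also have "\<dots> \<le> 2 * c^k * H" using s1 s2 c by (intro mult_left_mono) auto
        finally show ?thesis by (simp add: algebra_simps)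
      qed
      have "d m \<le> dm m a (b m)" unfolding d_def' by (rule cINF_lower[OF bdd1 b(1)])
      also have "\<dots> \<le> (\<Sum>k. 2 * H * c^k)" unfolding dm_def
        by (intro suminf_le sdm b(1) summable_mult geo termb)
      also have "\<dots> = 2 * H * S" using suminf_mult[OF geo(1), of "2*H"] geo(2) by simp
      also have "\<dots> = K * h m + e" using S K by (simp add: H K_def eps_def field_simps)
      finally show "d m \<le> K * h m + e" .
    qed
    have h_alt: "h = (\<lambda>m. \<Sum>i. c^i * t (m+i))" by (simp add: h_def fun_eq_iff)
    have Nh: "lq_norm q h \<le> ennreal S * lq_norm q t"
      unfolding h_alt S_def by (rule lq_conv[OF assms(4) c t0 tB])
    have h0: "0 \<le> h m" for m unfolding h_def using sh c t0 by (intro suminf_nonneg) auto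
    have Nd: "lq_norm q d \<le> ennreal K * lq_norm q h"
      by (rule lq_mono[OF assms(4) K]) (use F4 d0 h0 in \<open>simp add: abs_of_nonneg\<close>)
    have "lq_norm q d \<le> ennreal K * (ennreal S * lq_norm q t)"
      using Nd Nh by (meson order_trans mult_left_mono zero_le)
    then show "lq_norm q (\<lambda>m. dist_torus p al0 m a) \<le> ennreal (K * S) * lq_norm q (\<lambda>m. dist_torus_tilde p al0 m a)"
      using K S by (simp add: d_def[abs_def] t_def[abs_def] ennreal_mult mult.assoc)
    have Nt: "lq_norm q t \<le> ennreal (exp (real p)) * lq_norm q d"
      by (rule lq_mono[OF assms(4)]) (use F3 t0 d0 in \<open>auto simp: exp_minus field_simps\<close>)
    have "ennreal (exp (- real p)) * lq_norm q t \<le> ennreal (exp (- real p)) * (ennreal (exp (real p)) * lq_norm q d)"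
      by (intro mult_left_mono Nt) auto
    also have "\<dots> = lq_norm q d"
      by (simp add: mult.assoc[symmetric] ennreal_mult[symmetric] exp_minus)
    finally show "ennreal (exp (- real p)) * lq_norm q (\<lambda>m. dist_torus_tilde p al0 m a) \<le> lq_norm q (\<lambda>m. dist_torus p al0 m a)"
      by (simp add: d_def[abs_def] t_def[abs_def])
  qed
qed

end
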